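(* Let $N\ge2$, $d\ge1$, $1\le p\le q\le\infty$, let $S\subset\mathbb{Z}_N^d$ be nonempty and satisfy a $(p,q)$-restriction estimate with constant $C_{p,q}>0$, and let $E\subset\mathbb{Z}_N^d$ satisfy $$|E|^{1/p}\cdot|S|<\frac{N^d}{2C_{p,q}}.$$ Let $r(x)=\sum_{m\notin S}\chi(x\cdot m)\widehat{1_E}(m)$ and $G(x)=1$ if $|r(x)|\ge1/2$, $G(x)=0$ otherwise. Then $G=1_E$ on $\mathbb{Z}_N^d$.
   Context: $\chi(t)=e^{2\pi i t/N}$, $\hat h(m)=N^{-d}\sum_{x\in\mathbb{Z}_N^d}\chi(-x\cdot m)h(x)$, and $1_E$ is the indicator function of $E$. A $(p,q)$-restriction estimate holds for a nonempty $S$ with constant $C_{p,q}$ if for every $h:\mathbb{Z}_N^d\to\mathbb{C}$, $\big(\frac{1}{|S|}\sum_{m\in S}|\hat h(m)|^q\big)^{1/q}\le C_{p,q}N^{-d}\big(\sum_x|h(x)|^p\big)^{1/p}$ (for $q=\infty$ the left side is $\max_{m\in S}|\hat h(m)|$). *)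

theory Defs
  imports "HOL-Analysis.Analysis"
begin

definition ZN :: "nat \<Rightarrow> nat \<Rightarrow> (nat \<Rightarrow> nat) set" where
  "ZN N d = {x. (\<forall>i<d. x i < N) \<and> (\<forall>i\<ge>d. x i = 0)}"

definition dotp :: "nat \<Rightarrow> (nat \<Rightarrow> nat) \<Rightarrow> (nat \<Rightarrow> nat) \<Rightarrow> int" where
  "dotp d x m = (\<Sum>i<d. int (x i * m i))"

definition chi :: "nat \<Rightarrow> int \<Rightarrow> complex" where
  "chi N t = exp (2 * of_real pi * \<i> * of_int t / of_nat N)"

definition fhat :: "nat \<Rightarrow> nat \<Rightarrow> ((nat \<Rightarrow> nat) \<Rightarrow> complex) \<Rightarrow> (nat \<Rightarrow> nat) \<Rightarrow> complex" where
  "fhat N d h m = (1 / of_nat N ^ d) * (\<Sum>x\<in>ZN N d. chi N (- dotp d x m) * h x)"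

definition lpnorm :: "ereal \<Rightarrow> 'a set \<Rightarrow> ('a \<Rightarrow> complex) \<Rightarrow> real" where
  "lpnorm p A h = (if p = \<infinity> then Max ((\<lambda>x. cmod (h x)) ` A)
     else (\<Sum>x\<in>A. cmod (h x) powr real_of_ereal p) powr (1 / real_of_ereal p))"

definition avgnorm :: "ereal \<Rightarrow> 'a set \<Rightarrow> ('a \<Rightarrow> complex) \<Rightarrow> real" where
  "avgnorm q A g = (if q = \<infinity> then Max ((\<lambda>m. cmod (g m)) ` A)
     else ((1 / real (card A)) * (\<Sum>m\<in>A. cmod (g m) powr real_of_ereal q)) powr (1 / real_of_ereal q))"

definition restriction_estimate ::
  "nat \<Rightarrow> nat \<Rightarrow> (nat \<Rightarrow> nat) set \<Rightarrow> ereal \<Rightarrow> ereal \<Rightarrow> real \<Rightarrow> bool" where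
  "restriction_estimate N d S p q C \<longleftrightarrow>
     (\<forall>h :: (nat \<Rightarrow> nat) \<Rightarrow> complex.
        avgnorm q S (fhat N d h) \<le> C * (1 / real N ^ d) * lpnorm p (ZN N d) h)"

end

theory Submission
  imports Defs
begin


lemma chi_add: "chi N (a + b) = chi N a * chi N b"
  unfolding chi_def by (simp add: add_divide_distrib distrib_left distrib_right exp_add[symmetric])

lemma chi_period: "chi N (a + int N * k) = chi N a"
proof (cases "N = 0")
  case True then show ?thesis by simp
next
  case False
  have "chi N (int N * k) = exp (\<i> * (of_int k * (of_real pi * 2)))"
    unfolding chi_def using False by (simp add: field_simps)
  also have "\<dots> = 1" by simp
  finally show ?thesis by (simp add: chi_add)
qed

lemma chi_neq1: assumes "a \<noteq> 0" "\<bar>a\<bar> < int N" shows "chi N a \<noteq> 1"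
proof
  assume "chi N a = 1"
  then obtain n :: int where n: "Im (2 * of_real pi * \<i> * of_int a / of_nat N) = of_int (2*n) * pi"
    unfolding chi_def exp_eq_1 by blast
  have N: "N > 0" using assms by auto
  from n have "2 * pi * a / N = 2 * n * pi" by simp
  then have "real_of_int a = n * N" using N by (simp add: field_simps)
  then have "a = n * int N" by (metis of_int_eq_iff of_int_mult of_int_of_nat_eq)
  then have "\<bar>a\<bar> = \<bar>n\<bar> * int N" by (simp add: abs_mult)
  moreover have "n \<noteq> 0" using assms \<open>a = n * int N\<close> by auto
  moreover have "1 \<le> \<bar>n\<bar>" using \<open>n \<noteq> 0\<close> by linarith
  ultimately have "\<bar>a\<bar> \<ge> int N" using mult_right_mono[of 1 "\<bar>n\<bar>" "int N"] by simp
  with assms show False by simp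
qed

lemma norm_chi: "cmod (chi N t) = 1"
  unfolding chi_def by (simp add: norm_exp_eq_Re)

lemma chi0: "chi N 0 = 1" unfolding chi_def by simp



lemma ZN_image: "ZN N d = (\<lambda>f i. if i < d then f i else 0) ` (PiE {..<d} (\<lambda>_. {..<N}))"
proof
  show "ZN N d \<subseteq> (\<lambda>f i. if i < d then f i else 0) ` (PiE {..<d} (\<lambda>_. {..<N}))"
  proof
    fix x assume x: "x \<in> ZN N d"
    have "x = (\<lambda>i. if i < d then restrict x {..<d} i else 0)"
      using x by (auto simp: ZN_def fun_eq_iff)
    moreover have "restrict x {..<d} \<in> PiE {..<d} (\<lambda>_. {..<N})" using x by (auto simp: ZN_def)
    ultimately show "x \<in> (\<lambda>f i. if i < d then f i else 0) ` (PiE {..<d} (\<lambda>_. {..<N}))" by blast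
  qed
qed (auto simp: ZN_def PiE_def Pi_def)

lemma ZN_inj: "inj_on (\<lambda>f i. if i < d then f i else (0::nat)) (PiE {..<d} (\<lambda>_. {..<N}))"
proof (rule inj_onI)
  fix f g assume f: "f \<in> PiE {..<d} (\<lambda>_. {..<N})" and g: "g \<in> PiE {..<d} (\<lambda>_. {..<N})"
    and e: "(\<lambda>i. if i < d then f i else 0) = (\<lambda>i. if i < d then g i else 0)"
  show "f = g"
  proof (rule PiE_ext[OF f g])
    fix i assume "i \<in> {..<d}" then show "f i = g i" using fun_cong[OF e, of i] by simp
  qed
qed

lemma finite_ZN: "finite (ZN N d)"
  unfolding ZN_image by (intro finite_imageI finite_PiE) auto

lemma card_ZN: "card (ZN N d) = N ^ d"
  unfolding ZN_image by (simp add: card_image[OF ZN_inj] card_PiE)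

definition sh :: "nat \<Rightarrow> nat \<Rightarrow> (nat \<Rightarrow> nat) \<Rightarrow> (nat \<Rightarrow> nat)" where
  "sh N j m = m(j := (m j + 1) mod N)"

lemma sh_inj: assumes "j < d" "N > 0" shows "inj_on (sh N j) (ZN N d)"
  proof (rule inj_onI)
    fix m m' assume m: "m \<in> ZN N d" and m': "m' \<in> ZN N d" and e: "sh N j m = sh N j m'"
    have a: "m j < N" "m' j < N" using m m' assms by (auto simp: ZN_def)
    have b: "(m j + 1) mod N = (m' j + 1) mod N" using fun_cong[OF e, of j] by (simp add: sh_def)
    have "m j = m' j"
    proof (cases "m j + 1 = N")
      case True
      then show ?thesis using a b
        by (metis Suc_eq_plus1 Suc_lessI add_right_cancel mod_less mod_self nat.simps(3))
    next
      case False
      then show ?thesis using a b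
        by (metis Suc_eq_plus1 Suc_lessI add_right_cancel mod_less mod_self nat.simps(3))
    qed
    then show "m = m'" using e by (auto simp: sh_def fun_eq_iff split: if_splits)
  qed

lemma sh_bij: assumes "j < d" "N > 0" shows "sh N j ` ZN N d = ZN N d"
proof (rule endo_inj_surj[OF finite_ZN])
  show "sh N j ` ZN N d \<subseteq> ZN N d" using assms by (auto simp: sh_def ZN_def)
  show "inj_on (sh N j) (ZN N d)" using sh_inj[OF assms] .
qed

lemma dotp_sh: assumes "j < d"
  shows "dotp d x (sh N j m) = dotp d x m + int (x j) * (int ((m j + 1) mod N) - int (m j))"
proof -
  have "dotp d x (sh N j m) = (\<Sum>i<d. int (x i * m i) + (if i = j then int (x j) * (int ((m j + 1) mod N) - int (m j)) else 0))"
    unfolding dotp_def sh_def by (intro sum.cong) (auto simp: algebra_simps)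
  also have "\<dots> = dotp d x m + int (x j) * (int ((m j + 1) mod N) - int (m j))"
    unfolding dotp_def sum.distrib using assms by simp
  finally show ?thesis .
qed

lemma ortho:
  assumes x: "x \<in> ZN N d" and y: "y \<in> ZN N d" and N: "N > 0"
  shows "(\<Sum>m\<in>ZN N d. chi N (dotp d x m - dotp d y m)) = (if x = y then of_nat N ^ d else 0)"
proof (cases "x = y")
  case True then show ?thesis by (simp add: chi0 card_ZN)
next
  case False
  then obtain j where j: "x j \<noteq> y j" by blast
  with x y have jd: "j < d" by (auto simp: ZN_def) (metis not_le)
  define a where "a = int (x j) - int (y j)"
  have a0: "a \<noteq> 0" using j by (simp add: a_def)
  have "x j < N" "y j < N" using x y jd by (auto simp: ZN_def)
  then have aN: "\<bar>a\<bar> < int N" by (auto simp: a_def)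
  define F where "F m = chi N (dotp d x m - dotp d y m)" for m
  have step: "F (sh N j m) = chi N a * F m" if m: "m \<in> ZN N d" for m
  proof -
    define del where "del = int ((m j + 1) mod N) - int (m j)"
    have "m j < N" using m jd by (auto simp: ZN_def)
    then have del: "del = 1 \<or> del = 1 - int N"
    proof (cases "m j + 1 < N")
      case True then show ?thesis unfolding del_def by simp
    next
      case False
      then have "m j + 1 = N" using \<open>m j < N\<close> by linarith
      then show ?thesis unfolding del_def by auto
    qed
    have ca: "chi N (a * del) = chi N a"
    proof (cases "del = 1")
      case False
      then have "del = 1 - int N" using del by simp
      then have "a * del = a * (1 - int N)" by simp
      also have "\<dots> = a + int N * (- a)" by (simp add: algebra_simps)
      finally have "a * del = a + int N * (- a)" .
      then show ?thesis using chi_period[of N a "- a"] by simp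
    qed simp
    have "F (sh N j m) = chi N ((dotp d x m - dotp d y m) + a * del)"
      unfolding F_def dotp_sh[OF jd] a_def del_def by (simp add: algebra_simps)
    also have "\<dots> = chi N a * F m" unfolding chi_add ca F_def by simp
    finally show ?thesis .
  qed
  have "sum F (ZN N d) = sum F (sh N j ` ZN N d)" using sh_bij[OF jd N] by simp
  also have "\<dots> = sum (F \<circ> sh N j) (ZN N d)"
    using sum.reindex[OF sh_inj[OF jd N]] .
  also have "\<dots> = chi N a * sum F (ZN N d)"
    by (simp add: step sum_distrib_left)
  finally have "(1 - chi N a) * sum F (ZN N d) = 0" by (simp add: algebra_simps)
  then have "sum F (ZN N d) = 0" using chi_neq1[OF a0 aN] by simp
  then show ?thesis using False by (simp add: F_def)
qed



lemma inversion:
  assumes x: "x \<in> ZN N d" and N: "N > 0"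
  shows "(\<Sum>m\<in>ZN N d. chi N (dotp d x m) * fhat N d h m) = h x"
proof -
  have "(\<Sum>m\<in>ZN N d. chi N (dotp d x m) * fhat N d h m)
      = (\<Sum>m\<in>ZN N d. \<Sum>y\<in>ZN N d. (1 / of_nat N ^ d) * (h y * chi N (dotp d x m - dotp d y m)))"
    unfolding fhat_def sum_distrib_left
    by (intro sum.cong refl) (simp add: chi_add[symmetric] algebra_simps)
  also have "\<dots> = (\<Sum>y\<in>ZN N d. (1 / of_nat N ^ d) * (h y * (\<Sum>m\<in>ZN N d. chi N (dotp d x m - dotp d y m))))"
    by (subst sum.swap) (simp add: sum_distrib_left)
  also have "\<dots> = (\<Sum>y\<in>ZN N d. (if y = x then h x else 0))"
    using N by (intro sum.cong refl) (auto simp: ortho[OF x _ N])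
  also have "\<dots> = h x" using x finite_ZN by simp
  finally show ?thesis .
qed

lemma powr_convex0: assumes r: "r \<ge> 1" shows "convex_on {0..} (\<lambda>x::real. x powr r)"
proof (rule convex_onI)
  show "convex {0::real..}" by simp
  fix t x y :: real assume t: "0 < t" "t < 1" and xy: "x \<in> {0..}" "y \<in> {0..}"
  have key: "(s * z) powr r \<le> s * z powr r" if "0 \<le> s" "s \<le> 1" "0 \<le> z" for s z :: real
  proof -
    have "(s * z) powr r = s powr r * z powr r" using that by (simp add: powr_mult)
    also have "s powr r \<le> s" using that r
      by (cases "s = 0") (auto intro: powr_le_one_le)
    then have "s powr r * z powr r \<le> s * z powr r" using that by (simp add: mult_right_mono)
    finally show ?thesis .
  qed
  show "((1 - t) *\<^sub>R x + t *\<^sub>R y) powr r \<le> (1 - t) * x powr r + t * y powr r"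
  proof (cases "x = 0 \<or> y = 0")
    case True
    then show ?thesis
    proof
      assume "x = 0" then show ?thesis using key[of t y] t xy by auto
    next
      assume "y = 0" then show ?thesis using key[of "1 - t" x] t xy by auto
    qed
  next
    case False
    then have "x \<in> {0<..}" "y \<in> {0<..}" using xy by auto
    from convex_onD[OF powr_convex[OF r] _ _ this] t show ?thesis by auto
  qed
qed

lemma avg_le:
  fixes c :: "'a \<Rightarrow> real"
  assumes "finite S" "S \<noteq> {}" "r \<ge> 1" "\<And>i. c i \<ge> 0"
  shows "sum c S \<le> real (card S) * ((1 / real (card S)) * (\<Sum>i\<in>S. c i powr r)) powr (1 / r)"
proof -
  define n where "n = real (card S)"
  have n: "n > 0" using assms by (simp add: n_def card_gt_0_iff)
  have "(\<Sum>i\<in>S. (1/n) *\<^sub>R c i) powr r \<le> (\<Sum>i\<in>S. (1/n) * c i powr r)"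
    by (rule convex_on_sum[OF assms(1,2) powr_convex0[OF assms(3)]]) (use n assms in \<open>auto simp: n_def\<close>)
  then have "((\<Sum>i\<in>S. (1/n) * c i) powr r) powr (1/r) \<le> ((1/n) * (\<Sum>i\<in>S. c i powr r)) powr (1/r)"
    using assms(3) by (intro powr_mono2) (auto simp: sum_distrib_left intro!: sum_nonneg)
  moreover have "((\<Sum>i\<in>S. (1/n) * c i) powr r) powr (1/r) = (\<Sum>i\<in>S. (1/n) * c i)"
    using assms n by (simp add: powr_powr sum_nonneg)
  ultimately have "sum c S / n \<le> ((1/n) * (\<Sum>i\<in>S. c i powr r)) powr (1/r)"
    by (simp add: sum_distrib_left[symmetric] divide_inverse mult.commute)
  then show ?thesis using n unfolding n_def[symmetric] by (simp add: field_simps)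
qed



lemma ereal_fin: assumes "1 \<le> (p::ereal)" "p \<noteq> \<infinity>" shows "p = ereal (real_of_ereal p) \<and> real_of_ereal p \<ge> 1"
  using assms by (cases p) auto

theorem theorem4:
  fixes N d :: nat and p q :: ereal and C :: real
    and S E :: "(nat \<Rightarrow> nat) set"
  assumes "N \<ge> 2" and "d \<ge> 1"
    and "1 \<le> p" and "p \<le> q"
    and "S \<subseteq> ZN N d" and "S \<noteq> {}"
    and "C > 0" and "restriction_estimate N d S p q C"
    and "E \<subseteq> ZN N d"
    and "(if p = \<infinity> then 1 else real (card E) powr (1 / real_of_ereal p)) * real (card S)
           < real N ^ d / (2 * C)"
  shows "\<forall>x\<in>ZN N d.
     (let r = (\<Sum>m\<in>ZN N d - S. chi N (dotp d x m) * fhat N d (indicator E) m)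
      in (if cmod r \<ge> 1/2 then 1 else 0) = (indicator E x :: real))"
proof -
  define B where "B = (if p = \<infinity> then 1 else real (card E) powr (1 / real_of_ereal p))"
  define g where "g = fhat N d (indicator E)"
  have N: "N > 0" using assms(1) by simp
  have fS: "finite S" using assms(5) finite_ZN finite_subset by blast
  have fE: "finite E" using assms(9) finite_ZN finite_subset by blast
  have "(\<lambda>_. 0) \<in> ZN N d" using N by (simp add: ZN_def)
  then have ZNne: "ZN N d \<noteq> {}" by blast
  have A: "lpnorm p (ZN N d) (indicator E :: _ \<Rightarrow> complex) \<le> B"
  proof (cases "p = \<infinity>")
    case True
    then show ?thesis unfolding lpnorm_def B_def
      using finite_ZN ZNne by (auto simp: Max_le_iff indicator_def)
  next
    case False
    define p' where "p' = real_of_ereal p"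
    have p': "p' \<ge> 1" using ereal_fin[OF assms(3) False] by (simp add: p'_def)
    have "(\<Sum>x\<in>ZN N d. cmod (indicator E x :: complex) powr p') = (\<Sum>x\<in>ZN N d. indicator E x)"
      using p' by (intro sum.cong refl) (auto simp: indicator_def)
    also have "\<dots> = (\<Sum>x\<in>ZN N d. real (indicator E x :: nat))"
      by (intro sum.cong refl) (auto simp: indicator_def)
    also have "\<dots> = real (\<Sum>x\<in>ZN N d. indicator E x :: nat)"
      by (rule of_nat_sum[symmetric])
    also have "\<dots> = real (card E)"
      using sum_indicator_eq_card[OF finite_ZN, of E N d] assms(9)
      by (simp add: Int_absorb1)
    finally show ?thesis unfolding lpnorm_def B_def using False by (simp add: p'_def)
  qed
  have Bq: "(\<Sum>m\<in>S. cmod (g m)) \<le> real (card S) * avgnorm q S g"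
  proof (cases "q = \<infinity>")
    case True
    have "(\<Sum>m\<in>S. cmod (g m)) \<le> real (card S) * Max ((\<lambda>m. cmod (g m)) ` S)"
      by (rule sum_bounded_above) (use fS in auto)
    then show ?thesis unfolding avgnorm_def using True by simp
  next
    case False
    have q1: "1 \<le> q" using assms(3,4) by auto
    have "real_of_ereal q \<ge> 1" using ereal_fin[OF q1 False] by simp
    from avg_le[OF fS assms(6) this, of "\<lambda>m. cmod (g m)"]
    show ?thesis unfolding avgnorm_def using False by simp
  qed
  have Ce: "avgnorm q S g \<le> C * (1 / real N ^ d) * lpnorm p (ZN N d) (indicator E)"
    using assms(8) unfolding restriction_estimate_def g_def by blast
  have pos: "0 \<le> C * (1 / real N ^ d)" using assms(7) by simp
  have "(\<Sum>m\<in>S. cmod (g m)) \<le> real (card S) * (C * (1 / real N ^ d) * B)"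
    using Bq Ce mult_left_mono[OF A pos] by (meson mult_left_mono of_nat_0_le_iff order_trans)
  also have "\<dots> < 1/2"
  proof -
    have "B * real (card S) < real N ^ d / (2 * C)" using assms(10) by (simp add: B_def)
    then have "B * real (card S) * (2 * C) < real N ^ d" using assms(7) by (simp add: field_simps)
    then show ?thesis using N by (simp add: field_simps)
  qed
  finally have small: "(\<Sum>m\<in>S. cmod (g m)) < 1/2" .
  show ?thesis
  proof
    fix x assume x: "x \<in> ZN N d"
    define e where "e = (\<Sum>m\<in>S. chi N (dotp d x m) * g m)"
    have "cmod e \<le> (\<Sum>m\<in>S. cmod (chi N (dotp d x m) * g m))" unfolding e_def by (rule norm_sum)
    also have "\<dots> = (\<Sum>m\<in>S. cmod (g m))" by (simp add: norm_mult norm_chi)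
    finally have ce: "cmod e < 1/2" using small by simp
    have r: "(\<Sum>m\<in>ZN N d - S. chi N (dotp d x m) * g m) = indicator E x - e"
      unfolding e_def g_def
      by (simp add: sum_diff[OF finite_ZN assms(5)] inversion[OF x N])
    show "(let r = (\<Sum>m\<in>ZN N d - S. chi N (dotp d x m) * fhat N d (indicator E) m)
      in (if cmod r \<ge> 1/2 then 1 else 0) = (indicator E x :: real))"
    proof (cases "x \<in> E")
      case True
      have "cmod (1 - e) \<ge> 1 - cmod e" using norm_triangle_ineq2[of 1 e] by simp
      then have "cmod (1 - e) \<ge> 1/2" using ce by linarith
      then show ?thesis using r True unfolding g_def Let_def by simp
    next
      case False
      then show ?thesis using r ce unfolding g_def Let_def by simp
    qed
  qed
qed


end
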